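(* Let $\mathbf i'=\zeta_k\mathbf i$ be a 6-move. The 6-move degree map $\mathbf g'\mapsto\mathbf g$ on $\mathbb Z^{\oplus\mathbb N}$ (defined in the context) sends the cone $C_{\mathbf i'}$ into the cone $C_{\mathbf i}$.
   Context: $\mathfrak g$ is a complex finite-dimensional simple Lie algebra with index set $I$ and Cartan matrix $\mathsf C=(\mathsf c_{i,j})$. $\mathbb N=\{1,2,\dots\}$, $[a]_+=\max(a,0)$. $I^{(\infty)}$: sequences $\mathbf i=(i_u)_{u\in\mathbb N}\in I^{\mathbb N}$ with every element of $I$ occurring infinitely often; $u^-_{\mathbf i}=\max(\{v<u:i_v=i_u\}\cup\{0\})$. A 6-move $\mathbf i'=\zeta_k\mathbf i$: $i_k=i_{k+2}=i_{k+4}=i'_{k+1}=i'_{k+3}=i'_{k+5}$, $i_{k+1}=i_{k+3}=i_{k+5}=i'_k=i'_{k+2}=i'_{k+4}$, $i_u=i'_u$ for $u\notin[k,k+5]$, $\mathsf c_{i_{k+1},i_k}\mathsf c_{i_k,i_{k+1}}=3$. Put $i=i_k$, $j=i_{k+1}$. The 6-move degree map: for $\mathbf g'=(g'_u)$ set $A=g'_{k+2}-\mathsf c_{j,i}[g'_{k+1}]_+$, $B=g'_{k+3}-[-g'_{k+1}]_+$, $C=-g'_{k+1}-\mathsf c_{i,j}[A]_+-[-B]_+$, $D=g'_k+\mathsf c_{j,i}[-g'_{k+1}]_+-2[-A]_++\mathsf c_{j,i}[-C]_+$, $E=-A-\mathsf c_{j,i}[C]_++[D]_+$, $F=-C+\mathsf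 c_{i,j}[-D]_+$, $G=-B-[-C]_++\mathsf c_{i,j}[-E]_++[F]_+$, $H=-D+[E]_++\mathsf c_{j,i}[-F]_+$, $I=-F+[G]_++\mathsf c_{i,j}[-H]_+$; then $g_{k^-_{\mathbf i}}=g'_{(k+1)^-_{\mathbf i'}}+[g'_{k+1}]_++[B]_+-[-G]_+-[-I]_+$ (if $k^-_{\mathbf i}>0$), $g_{(k+1)^-_{\mathbf i}}=g'_{k^-_{\mathbf i'}}+[D]_+-\mathsf c_{j,i}[F]_++2[H]_+-\mathsf c_{j,i}[I]_+$ (if $(k+1)^-_{\mathbf i}>0$), $g_k=-I$, $g_{k+1}=-H+\mathsf c_{j,i}[-I]_+$, $g_{k+2}=-G+[I]_+$, $g_{k+3}=-E+\mathsf c_{j,i}[-G]_++[H]_+$, $g_{k+4}=g'_{k+5}-[-B]_++[G]_+$, $g_{k+5}=g'_{k+4}-[-A]_+-\mathsf c_{j,i}[B]_++[E]_+$, $g_u=g'_u$ otherwise. Cone: $C_{\mathbf i}=\{\mathbf g\in\mathbb Z^{\oplus\mathbb N}:\sum_{v\ge u,\,i_v=i_u}g_v\ge0\ \forall u\in\mathbb N\}$. *)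

theory Defs
  imports Complex_Main
begin

text \<open>Cartan matrix of a complex finite-dimensional simple Lie algebra, i.e. an
indecomposable generalized Cartan matrix of finite type (symmetrizable with
positive definite symmetrization).\<close>
definition simple_cartan_matrix :: "'a set \<Rightarrow> ('a \<Rightarrow> 'a \<Rightarrow> int) \<Rightarrow> bool" where
  "simple_cartan_matrix I C \<longleftrightarrow>
     finite I \<and> I \<noteq> {} \<and>
     (\<forall>i\<in>I. C i i = 2) \<and>
     (\<forall>i\<in>I. \<forall>j\<in>I. i \<noteq> j \<longrightarrow> C i j \<le> 0) \<and>
     (\<forall>i\<in>I. \<forall>j\<in>I. C i j = 0 \<longleftrightarrow> C j i = 0) \<and>
     (\<exists>d :: 'a \<Rightarrow> real. (\<forall>i\<in>I. d i > 0) \<and>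
        (\<forall>i\<in>I. \<forall>j\<in>I. d i * of_int (C i j) = d j * of_int (C j i)) \<and>
        (\<forall>x :: 'a \<Rightarrow> real. (\<exists>i\<in>I. x i \<noteq> 0) \<longrightarrow>
           (\<Sum>i\<in>I. \<Sum>j\<in>I. x i * d i * of_int (C i j) * x j) > 0)) \<and>
     (\<forall>J. J \<subseteq> I \<and> J \<noteq> {} \<and> J \<noteq> I \<longrightarrow> (\<exists>i\<in>J. \<exists>j\<in>I - J. C i j \<noteq> 0))"

text \<open>Sequences \<open>(i_u)_{u \<in> \<nat>}\<close>, \<open>\<nat> = {1,2,...}\<close>, represented as \<open>nat \<Rightarrow> 'a\<close>
(the value at 0 is irrelevant); every element of \<open>I\<close> occurs infinitely often.\<close>
definition inf_seq :: "'a set \<Rightarrow> (nat \<Rightarrow> 'a) \<Rightarrow> bool" where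
  "inf_seq I s \<longleftrightarrow> (\<forall>u\<ge>1. s u \<in> I) \<and> (\<forall>a\<in>I. infinite {u. 1 \<le> u \<and> s u = a})"

definition prev :: "(nat \<Rightarrow> 'a) \<Rightarrow> nat \<Rightarrow> nat" where
  "prev s u = Max ({v. 1 \<le> v \<and> v < u \<and> s v = s u} \<union> {0})"

definition six_move :: "('a \<Rightarrow> 'a \<Rightarrow> int) \<Rightarrow> (nat \<Rightarrow> 'a) \<Rightarrow> (nat \<Rightarrow> 'a) \<Rightarrow> nat \<Rightarrow> bool" where
  "six_move C s s' k \<longleftrightarrow> 1 \<le> k \<and>
     s k = s (k+2) \<and> s (k+2) = s (k+4) \<and> s (k+4) = s' (k+1) \<and>
     s' (k+1) = s' (k+3) \<and> s' (k+3) = s' (k+5) \<and>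
     s (k+1) = s (k+3) \<and> s (k+3) = s (k+5) \<and> s (k+5) = s' k \<and>
     s' k = s' (k+2) \<and> s' (k+2) = s' (k+4) \<and>
     (\<forall>u. 1 \<le> u \<and> (u < k \<or> k + 5 < u) \<longrightarrow> s u = s' u) \<and>
     C (s (k+1)) (s k) * C (s k) (s (k+1)) = 3"

text \<open>\<open>\<int>^{\<oplus>\<nat>}\<close>: finitely supported integer vectors indexed by \<open>\<nat> = {1,2,...}\<close>
(represented as \<open>nat \<Rightarrow> int\<close> vanishing at 0).\<close>
definition fin_vecs :: "(nat \<Rightarrow> int) set" where
  "fin_vecs = {g. g 0 = 0 \<and> finite {u. g u \<noteq> 0}}"

text \<open>The cone \<open>C_s\<close>; the sum over \<open>v \<ge> u, s_v = s_u\<close> is the (finite) sum over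
the support.\<close>
definition cone :: "(nat \<Rightarrow> 'a) \<Rightarrow> (nat \<Rightarrow> int) set" where
  "cone s = {g \<in> fin_vecs. \<forall>u\<ge>1. (\<Sum>v\<in>{v. u \<le> v \<and> s v = s u \<and> g v \<noteq> 0}. g v) \<ge> 0}"

definition pp :: "int \<Rightarrow> int" where "pp x = max x 0"

definition six_deg :: "('a \<Rightarrow> 'a \<Rightarrow> int) \<Rightarrow> (nat \<Rightarrow> 'a) \<Rightarrow> (nat \<Rightarrow> 'a) \<Rightarrow> nat
    \<Rightarrow> (nat \<Rightarrow> int) \<Rightarrow> (nat \<Rightarrow> int)" where
  "six_deg C s s' k g' =
    (let i = s k; j = s (k+1); cji = C j i; cij = C i j;
         A = g' (k+2) - cji * pp (g' (k+1));
         B = g' (k+3) - pp (- g' (k+1));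
         Cc = - g' (k+1) - cij * pp A - pp (-B);
         D = g' k + cji * pp (- g' (k+1)) - 2 * pp (-A) + cji * pp (-Cc);
         E = - A - cji * pp Cc + pp D;
         F = - Cc + cij * pp (-D);
         G = - B - pp (-Cc) + cij * pp (-E) + pp F;
         H = - D + pp E + cji * pp (-F);
         II = - F + pp G + cij * pp (-H);
         p0 = prev s k; p1 = prev s (k+1); q0 = prev s' k; q1 = prev s' (k+1)
     in (\<lambda>u. if u = k then - II
            else if u = k+1 then - H + cji * pp (-II)
            else if u = k+2 then - G + pp II
            else if u = k+3 then - E + cji * pp (-G) + pp H
            else if u = k+4 then g' (k+5) - pp (-B) + pp G
            else if u = k+5 then g' (k+4) - pp (-A) - cji * pp B + pp E
            else if 0 < p0 \<and> u = p0 then g' q1 + pp (g' (k+1)) + pp B - pp (-G) - pp (-II)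
            else if 0 < p1 \<and> u = p1 then g' q0 + pp D - cji * pp F + 2 * pp H - cji * pp II
            else g' u))"

end

theory Submission
  imports Defs
begin
lemma tail_eq:
  fixes h :: "nat \<Rightarrow> int"
  assumes "{v. h v \<noteq> 0} \<subseteq> {..N}"
  shows "(\<Sum>v\<in>{v. u \<le> v \<and> t v = c \<and> h v \<noteq> 0}. h v) = (\<Sum>v\<in>{u..N}. if t v = c then h v else 0)"
proof -
  have "(\<Sum>v\<in>{u..N}. if t v = c then h v else 0) = (\<Sum>v\<in>{v\<in>{u..N}. t v = c}. h v)"
    by (rule sum.inter_filter[OF finite_atLeastAtMost, symmetric])
  also have "\<dots> = (\<Sum>v\<in>{v. u \<le> v \<and> t v = c \<and> h v \<noteq> 0}. h v)"
    by (rule sum.mono_neutral_right) (use assms in auto)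
  finally show ?thesis by simp
qed

lemma sum_split_at:
  fixes f :: "nat \<Rightarrow> int"
  assumes "a \<le> b + 1" "b \<le> N"
  shows "(\<Sum>v\<in>{a..N}. f v) = (\<Sum>v\<in>{a..b}. f v) + (\<Sum>v\<in>{b+1..N}. f v)"
proof -
  have "{a..N} = {a..b} \<union> {b+1..N}" using assms by auto
  then show ?thesis by (simp add: sum.union_disjoint)
qed

lemma sum_skip:
  fixes f :: "nat \<Rightarrow> int"
  assumes "\<forall>v. a \<le> v \<and> v < w \<longrightarrow> f v = 0" "a \<le> w"
  shows "(\<Sum>v\<in>{a..N}. f v) = (\<Sum>v\<in>{w..N}. f v)"
  by (rule sum.mono_neutral_right) (use assms in auto)

lemma sum6:
  fixes f :: "nat \<Rightarrow> int"
  assumes "k \<le> u"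
  shows "(\<Sum>v\<in>{u..k+5}. f v) = (if u \<le> k then f k else 0) + (if u \<le> k+1 then f (k+1) else 0)
     + (if u \<le> k+2 then f (k+2) else 0) + (if u \<le> k+3 then f (k+3) else 0)
     + (if u \<le> k+4 then f (k+4) else 0) + (if u \<le> k+5 then f (k+5) else 0)"
proof -
  have "{u..k+5} = {v\<in>{k..k+5}. u \<le> v}" using assms by auto
  then have "(\<Sum>v\<in>{u..k+5}. f v) = (\<Sum>v\<in>{k..k+5}. if u \<le> v then f v else 0)"
    using sum.inter_filter[OF finite_atLeastAtMost, of f k "k+5" "\<lambda>v. u \<le> v"] by simp
  also have "{k..k+5} = {k, k+1, k+2, k+3, k+4, k+5}" by auto
  finally show ?thesis by (simp add: algebra_simps)
qed

lemma prev_props: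
  assumes "1 \<le> u"
  shows "prev t u < u" "prev t u = 0 \<or> (1 \<le> prev t u \<and> t (prev t u) = t u)"
    "\<And>v. 1 \<le> v \<Longrightarrow> v < u \<Longrightarrow> t v = t u \<Longrightarrow> v \<le> prev t u"
proof -
  let ?S = "{v. 1 \<le> v \<and> v < u \<and> t v = t u} \<union> {0}"
  have fin: "finite ?S" by (rule finite_subset[of _ "{..u}"]) auto
  have mem: "prev t u \<in> ?S" unfolding prev_def by (rule Max_in) (use fin in auto)
  then show "prev t u < u" using assms by auto
  from mem show "prev t u = 0 \<or> (1 \<le> prev t u \<and> t (prev t u) = t u)" by auto
  fix v assume "1 \<le> v" "v < u" "t v = t u"
  then show "v \<le> prev t u" unfolding prev_def by (intro Max_ge) (use fin in auto)
qed

lemma cartan_cases: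
  fixes a b :: int
  assumes "a \<le> 0" "b \<le> 0" "a * b = 3"
  shows "(a = -1 \<and> b = -3) \<or> (a = -3 \<and> b = -1)"
proof -
  have "a \<noteq> 0" "b \<noteq> 0" using assms by auto
  then have "a \<le> -1" "b \<le> -1" using assms by auto
  have "(-a) * 1 \<le> (-a) * (-b)" using \<open>b \<le> -1\<close> \<open>a \<le> -1\<close> by (intro mult_left_mono) auto
  then have "a \<ge> -3" using assms by simp
  have "1 * (-b) \<le> (-a) * (-b)" using \<open>b \<le> -1\<close> \<open>a \<le> -1\<close> by (intro mult_right_mono) auto
  then have "b \<ge> -3" using assms by simp
  have "a = -1 \<or> a = -2 \<or> a = -3" using \<open>a \<ge> -3\<close> \<open>a \<le> -1\<close> by linarith
  then show ?thesis using assms(3) by (elim disjE; simp; presburger?)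
qed
lemma pp_split: "x = pp x - pp (-x)" unfolding pp_def by simp
lemma core0:
  fixes g0 g1 g2 g3 g4 g5 X Y cij cji A B Cc D E F G H II :: int
  assumes ci: "cij = -1" and cj: "cji = -3" and X: "X \<ge> 0" and Y: "Y \<ge> 0"
  and h: "g4+Y \<ge> 0" "g2+g4+Y\<ge>0" "g0+g2+g4+Y\<ge>0" "g5+X\<ge>0" "g3+g5+X\<ge>0" "g1+g3+g5+X\<ge>0"
  and dA: "A = g2 - cji * pp g1"
  and dB: "B = g3 - pp (- g1)"
  and dC: "Cc = - g1 - cij * pp A - pp (-B)"
  and dD: "D = g0 + cji * pp (- g1) - 2 * pp (-A) + cji * pp (-Cc)"
  and dE: "E = - A - cji * pp Cc + pp D"
  and dF: "F = - Cc + cij * pp (-D)"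
  and dG: "G = - B - pp (-Cc) + cij * pp (-E) + pp F"
  and dH: "H = - D + pp E + cji * pp (-F)"
  and dI: "II = - F + pp G + cij * pp (-H)"
  shows "((g5 - pp (-B) + pp G) + X \<ge> 0) \<and>
    ((- G + pp II) + (g5 - pp (-B) + pp G) + X \<ge> 0) \<and>
    ((- II) + (- G + pp II) + (g5 - pp (-B) + pp G) + X \<ge> 0) \<and>
    ((g4 - pp (-A) - cji * pp B + pp E) + Y \<ge> 0) \<and>
    ((- E + cji * pp (-G) + pp H) + (g4 - pp (-A) - cji * pp B + pp E) + Y \<ge> 0) \<and>
    ((- H + cji * pp (-II)) + (- E + cji * pp (-G) + pp H) + (g4 - pp (-A) - cji * pp B + pp E) + Y \<ge> 0) \<and>
    (pp g1 + pp B - pp (-G) - pp (-II) + (- II) + (- G + pp II) + (g5 - pp (-B) + pp G) = g1 + g3 + g5) \<and>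
    (pp D - cji * pp F + 2 * pp H - cji * pp II + (- H + cji * pp (-II)) + (- E + cji * pp (-G) + pp H) + (g4 - pp (-A) - cji * pp B + pp E) = g0 + g2 + g4)"
proof -
  have "(g5 - pp (-B) + pp G) + X \<ge> 0"
    using X Y h dA dB dC dD dE dF dG dH dI unfolding ci cj pp_def by smt
  moreover have "(- G + pp II) + (g5 - pp (-B) + pp G) + X \<ge> 0"
    using X Y h dA dB dC dD dE dF dG dH dI unfolding ci cj pp_def by smt
  moreover have "(- II) + (- G + pp II) + (g5 - pp (-B) + pp G) + X \<ge> 0"
    using X Y h dA dB dC dD dE dF dG dH dI unfolding ci cj pp_def by smt
  moreover have "(g4 - pp (-A) - cji * pp B + pp E) + Y \<ge> 0"
    using X Y h dA dB dC dD dE dF dG dH dI unfolding ci cj pp_def by smt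
  moreover have "(- E + cji * pp (-G) + pp H) + (g4 - pp (-A) - cji * pp B + pp E) + Y \<ge> 0"
    using X Y h dA dB dC dD dE dF dG dH dI unfolding ci cj pp_def by smt
  moreover have "(- H + cji * pp (-II)) + (- E + cji * pp (-G) + pp H) + (g4 - pp (-A) - cji * pp B + pp E) + Y \<ge> 0"
    using X Y h dA dB dC dD dE dF dG dH dI unfolding ci cj pp_def by smt
  moreover have "pp g1 + pp B - pp (-G) - pp (-II) + (- II) + (- G + pp II) + (g5 - pp (-B) + pp G) = g1 + g3 + g5"
    using dA dB dC dD dE dF dG dH dI pp_split[of g1] pp_split[of A] pp_split[of B] pp_split[of Cc] pp_split[of D] pp_split[of E] pp_split[of F] pp_split[of G] pp_split[of H] pp_split[of II] unfolding ci cj by linarith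
  moreover have "pp D - cji * pp F + 2 * pp H - cji * pp II + (- H + cji * pp (-II)) + (- E + cji * pp (-G) + pp H) + (g4 - pp (-A) - cji * pp B + pp E) = g0 + g2 + g4"
    using dA dB dC dD dE dF dG dH dI pp_split[of g1] pp_split[of A] pp_split[of B] pp_split[of Cc] pp_split[of D] pp_split[of E] pp_split[of F] pp_split[of G] pp_split[of H] pp_split[of II] unfolding ci cj by linarith
  ultimately show ?thesis by blast
qed
lemma core1:
  fixes g0 g1 g2 g3 g4 g5 X Y cij cji A B Cc D E F G H II :: int
  assumes ci: "cij = -3" and cj: "cji = -1" and X: "X \<ge> 0" and Y: "Y \<ge> 0"
  and h: "g4+Y \<ge> 0" "g2+g4+Y\<ge>0" "g0+g2+g4+Y\<ge>0" "g5+X\<ge>0" "g3+g5+X\<ge>0" "g1+g3+g5+X\<ge>0"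
  and dA: "A = g2 - cji * pp g1"
  and dB: "B = g3 - pp (- g1)"
  and dC: "Cc = - g1 - cij * pp A - pp (-B)"
  and dD: "D = g0 + cji * pp (- g1) - 2 * pp (-A) + cji * pp (-Cc)"
  and dE: "E = - A - cji * pp Cc + pp D"
  and dF: "F = - Cc + cij * pp (-D)"
  and dG: "G = - B - pp (-Cc) + cij * pp (-E) + pp F"
  and dH: "H = - D + pp E + cji * pp (-F)"
  and dI: "II = - F + pp G + cij * pp (-H)"
  shows "((g5 - pp (-B) + pp G) + X \<ge> 0) \<and>
    ((- G + pp II) + (g5 - pp (-B) + pp G) + X \<ge> 0) \<and>
    ((- II) + (- G + pp II) + (g5 - pp (-B) + pp G) + X \<ge> 0) \<and>
    ((g4 - pp (-A) - cji * pp B + pp E) + Y \<ge> 0) \<and>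
    ((- E + cji * pp (-G) + pp H) + (g4 - pp (-A) - cji * pp B + pp E) + Y \<ge> 0) \<and>
    ((- H + cji * pp (-II)) + (- E + cji * pp (-G) + pp H) + (g4 - pp (-A) - cji * pp B + pp E) + Y \<ge> 0) \<and>
    (pp g1 + pp B - pp (-G) - pp (-II) + (- II) + (- G + pp II) + (g5 - pp (-B) + pp G) = g1 + g3 + g5) \<and>
    (pp D - cji * pp F + 2 * pp H - cji * pp II + (- H + cji * pp (-II)) + (- E + cji * pp (-G) + pp H) + (g4 - pp (-A) - cji * pp B + pp E) = g0 + g2 + g4)"
proof -
  have "(g5 - pp (-B) + pp G) + X \<ge> 0"
    using X Y h dA dB dC dD dE dF dG dH dI unfolding ci cj pp_def by smt
  moreover have "(- G + pp II) + (g5 - pp (-B) + pp G) + X \<ge> 0"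
    using X Y h dA dB dC dD dE dF dG dH dI unfolding ci cj pp_def by smt
  moreover have "(- II) + (- G + pp II) + (g5 - pp (-B) + pp G) + X \<ge> 0"
    using X Y h dA dB dC dD dE dF dG dH dI unfolding ci cj pp_def by smt
  moreover have "(g4 - pp (-A) - cji * pp B + pp E) + Y \<ge> 0"
    using X Y h dA dB dC dD dE dF dG dH dI unfolding ci cj pp_def by smt
  moreover have "(- E + cji * pp (-G) + pp H) + (g4 - pp (-A) - cji * pp B + pp E) + Y \<ge> 0"
    using X Y h dA dB dC dD dE dF dG dH dI unfolding ci cj pp_def by smt
  moreover have "(- H + cji * pp (-II)) + (- E + cji * pp (-G) + pp H) + (g4 - pp (-A) - cji * pp B + pp E) + Y \<ge> 0"
    using X Y h dA dB dC dD dE dF dG dH dI unfolding ci cj pp_def by smt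
  moreover have "pp g1 + pp B - pp (-G) - pp (-II) + (- II) + (- G + pp II) + (g5 - pp (-B) + pp G) = g1 + g3 + g5"
    using dA dB dC dD dE dF dG dH dI pp_split[of g1] pp_split[of A] pp_split[of B] pp_split[of Cc] pp_split[of D] pp_split[of E] pp_split[of F] pp_split[of G] pp_split[of H] pp_split[of II] unfolding ci cj by linarith
  moreover have "pp D - cji * pp F + 2 * pp H - cji * pp II + (- H + cji * pp (-II)) + (- E + cji * pp (-G) + pp H) + (g4 - pp (-A) - cji * pp B + pp E) = g0 + g2 + g4"
    using dA dB dC dD dE dF dG dH dI pp_split[of g1] pp_split[of A] pp_split[of B] pp_split[of Cc] pp_split[of D] pp_split[of E] pp_split[of F] pp_split[of G] pp_split[of H] pp_split[of II] unfolding ci cj by linarith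
  ultimately show ?thesis by blast
qed

lemma core:
  fixes g0 g1 g2 g3 g4 g5 X Y cij cji A B Cc D E F G H II :: int
  assumes cc: "(cij = -1 \<and> cji = -3) \<or> (cij = -3 \<and> cji = -1)" and X: "X \<ge> 0" and Y: "Y \<ge> 0"
  and h: "g4+Y \<ge> 0" "g2+g4+Y\<ge>0" "g0+g2+g4+Y\<ge>0" "g5+X\<ge>0" "g3+g5+X\<ge>0" "g1+g3+g5+X\<ge>0"
  and dA: "A = g2 - cji * pp g1"
  and dB: "B = g3 - pp (- g1)"
  and dC: "Cc = - g1 - cij * pp A - pp (-B)"
  and dD: "D = g0 + cji * pp (- g1) - 2 * pp (-A) + cji * pp (-Cc)"
  and dE: "E = - A - cji * pp Cc + pp D"
  and dF: "F = - Cc + cij * pp (-D)"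
  and dG: "G = - B - pp (-Cc) + cij * pp (-E) + pp F"
  and dH: "H = - D + pp E + cji * pp (-F)"
  and dI: "II = - F + pp G + cij * pp (-H)"
  shows "((g5 - pp (-B) + pp G) + X \<ge> 0) \<and>
    ((- G + pp II) + (g5 - pp (-B) + pp G) + X \<ge> 0) \<and>
    ((- II) + (- G + pp II) + (g5 - pp (-B) + pp G) + X \<ge> 0) \<and>
    ((g4 - pp (-A) - cji * pp B + pp E) + Y \<ge> 0) \<and>
    ((- E + cji * pp (-G) + pp H) + (g4 - pp (-A) - cji * pp B + pp E) + Y \<ge> 0) \<and>
    ((- H + cji * pp (-II)) + (- E + cji * pp (-G) + pp H) + (g4 - pp (-A) - cji * pp B + pp E) + Y \<ge> 0) \<and>
    (pp g1 + pp B - pp (-G) - pp (-II) + (- II) + (- G + pp II) + (g5 - pp (-B) + pp G) = g1 + g3 + g5) \<and>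
    (pp D - cji * pp F + 2 * pp H - cji * pp II + (- H + cji * pp (-II)) + (- E + cji * pp (-G) + pp H) + (g4 - pp (-A) - cji * pp B + pp E) = g0 + g2 + g4)"
  using cc
proof (elim disjE conjE)
  assume a: "cij = -1" "cji = -3"
  show ?thesis by (rule core0[OF a X Y h dA dB dC dD dE dF dG dH dI])
next
  assume a: "cij = -3" "cji = -1"
  show ?thesis by (rule core1[OF a X Y h dA dB dC dD dE dF dG dH dI])
qed
theorem lemma3p14:
  fixes I :: "'a set" and C :: "'a \<Rightarrow> 'a \<Rightarrow> int"
    and s s' :: "nat \<Rightarrow> 'a" and k :: nat and g' :: "nat \<Rightarrow> int"
  assumes "simple_cartan_matrix I C"
    and "inf_seq I s" and "inf_seq I s'"
    and "six_move C s s' k"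
    and "g' \<in> cone s'"
  shows "six_deg C s s' k g' \<in> cone s"
proof -
  note sm = assms(4)[unfolded six_move_def]
  define i where "i = s k"
  define j where "j = s (k+1)"
  define cij where "cij = C i j"
  define cji where "cji = C j i"
  have k1: "1 \<le> k" using sm by simp
  have s_i: "s k = i" "s (k+2) = i" "s (k+4) = i" "s' (k+1) = i" "s' (k+3) = i" "s' (k+5) = i"
    using sm i_def by auto
  have s_j: "s (k+1) = j" "s (k+3) = j" "s (k+5) = j" "s' k = j" "s' (k+2) = j" "s' (k+4) = j"
    using sm j_def by auto
  have s_lo: "\<And>u. 1 \<le> u \<Longrightarrow> u < k \<Longrightarrow> s' u = s u" using sm by auto
  have s_hi: "\<And>u. k+5 < u \<Longrightarrow> s' u = s u" using sm by auto
  have iI: "i \<in> I" "j \<in> I" using assms(2) k1 unfolding inf_seq_def i_def j_def by auto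
  have prod0: "C (s (k+1)) (s k) * C (s k) (s (k+1)) = 3" using sm by blast
  have prod: "cji * cij = 3" unfolding cij_def cji_def i_def j_def by (rule prod0)
  have ij: "i \<noteq> j"
  proof
    assume "i = j"
    then have "cij = 2" "cji = 2" using assms(1) iI unfolding simple_cartan_matrix_def cij_def cji_def by auto
    then show False using prod by simp
  qed
  have ji: "j \<noteq> i" using ij by auto
  have le: "cij \<le> 0" "cji \<le> 0" using assms(1) iI ij unfolding simple_cartan_matrix_def cij_def cji_def by auto
  have cc: "(cij = -1 \<and> cji = -3) \<or> (cij = -3 \<and> cji = -1)"
    using cartan_cases[OF le(1) le(2)] prod by (simp add: mult.commute)
  define p0 where "p0 = prev s k"
  define p1 where "p1 = prev s (k+1)"
  have "{v. 1 \<le> v \<and> v < k+1 \<and> s' v = s' (k+1)} = {v. 1 \<le> v \<and> v < k \<and> s v = s k}"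
    using s_lo s_i s_j ij by (auto simp: less_Suc_eq)
  then have q1: "prev s' (k+1) = p0" unfolding p0_def prev_def by simp
  have "{v. 1 \<le> v \<and> v < k \<and> s' v = s' k} = {v. 1 \<le> v \<and> v < k+1 \<and> s v = s (k+1)}"
    using s_lo s_i s_j ij by (auto simp: less_Suc_eq)
  then have q0: "prev s' k = p1" unfolding p1_def prev_def by simp
  have p0_lt: "p0 < k" and p0_c: "p0 = 0 \<or> (1 \<le> p0 \<and> s p0 = i)"
    and p0_max: "\<And>v. 1 \<le> v \<Longrightarrow> v < k \<Longrightarrow> s v = i \<Longrightarrow> v \<le> p0"
    using prev_props[OF k1, where t=s] unfolding p0_def i_def by auto
  have p1_le: "p1 < k+1" and p1_c: "p1 = 0 \<or> (1 \<le> p1 \<and> s p1 = j)"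
    and p1_max: "\<And>v. 1 \<le> v \<Longrightarrow> v < k+1 \<Longrightarrow> s v = j \<Longrightarrow> v \<le> p1"
    using prev_props[where u="k+1" and t=s] unfolding p1_def j_def by auto
  have p1_lt: "p1 < k" using p1_le p1_c s_i ij k1 by (cases "p1 = k") auto
  have p01: "0 < p0 \<Longrightarrow> 0 < p1 \<Longrightarrow> p0 \<noteq> p1" using p0_c p1_c ij by auto
  define A where "A = g' (k+2) - cji * pp (g' (k+1))"
  define B where "B = g' (k+3) - pp (- g' (k+1))"
  define Cc where "Cc = - g' (k+1) - cij * pp A - pp (-B)"
  define D where "D = g' k + cji * pp (- g' (k+1)) - 2 * pp (-A) + cji * pp (-Cc)"
  define E where "E = - A - cji * pp Cc + pp D"
  define F where "F = - Cc + cij * pp (-D)"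
  define G where "G = - B - pp (-Cc) + cij * pp (-E) + pp F"
  define H where "H = - D + pp E + cji * pp (-F)"
  define II where "II = - F + pp G + cij * pp (-H)"
  define g where "g = six_deg C s s' k g'"
  have g_eq: "g = (\<lambda>u. if u = k then - II
            else if u = k+1 then - H + cji * pp (-II)
            else if u = k+2 then - G + pp II
            else if u = k+3 then - E + cji * pp (-G) + pp H
            else if u = k+4 then g' (k+5) - pp (-B) + pp G
            else if u = k+5 then g' (k+4) - pp (-A) - cji * pp B + pp E
            else if 0 < p0 \<and> u = p0 then g' p0 + pp (g' (k+1)) + pp B - pp (-G) - pp (-II)
            else if 0 < p1 \<and> u = p1 then g' p1 + pp D - cji * pp F + 2 * pp H - cji * pp II
            else g' u)"
    unfolding g_def six_deg_def Let_def q0 q1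
    unfolding A_def B_def Cc_def D_def E_def F_def G_def H_def II_def cij_def cji_def i_def j_def p0_def p1_def
    by (rule refl)
  have gk: "g k = - II" "g (k+1) = - H + cji * pp (-II)" "g (k+2) = - G + pp II"
    "g (k+3) = - E + cji * pp (-G) + pp H" "g (k+4) = g' (k+5) - pp (-B) + pp G"
    "g (k+5) = g' (k+4) - pp (-A) - cji * pp B + pp E"
    by (simp_all add: g_eq)
  have gp0: "0 < p0 \<Longrightarrow> g p0 = g' p0 + pp (g' (k+1)) + pp B - pp (-G) - pp (-II)"
    using p0_lt by (simp add: g_eq)
  have gp1: "0 < p1 \<Longrightarrow> g p1 = g' p1 + pp D - cji * pp F + 2 * pp H - cji * pp II"
    using p1_lt p01 by (auto simp: g_eq)
  have goth: "\<And>u. u < k \<or> k+5 < u \<Longrightarrow> (0 < p0 \<longrightarrow> u \<noteq> p0) \<Longrightarrow> (0 < p1 \<longrightarrow> u \<noteq> p1) \<Longrightarrow> g u = g' u"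
    by (auto simp: g_eq)
  have g'fin: "g' 0 = 0" "finite {u. g' u \<noteq> 0}" using assms(5) unfolding cone_def fin_vecs_def by auto
  have g'cone: "\<And>u. 1 \<le> u \<Longrightarrow> (\<Sum>v\<in>{v. u \<le> v \<and> s' v = s' u \<and> g' v \<noteq> 0}. g' v) \<ge> 0"
    using assms(5) unfolding cone_def by auto
  define N where "N = Max ({u. g' u \<noteq> 0} \<union> {k+6})"
  have N1: "{u. g' u \<noteq> 0} \<subseteq> {..N}" unfolding N_def using g'fin by (auto intro: Max_ge)
  have N2: "k+6 \<le> N" unfolding N_def using g'fin by (auto intro: Max_ge)
  have N3: "{u. g u \<noteq> 0} \<subseteq> {..N}"
  proof
    fix u assume "u \<in> {u. g u \<noteq> 0}"
    then have gu: "g u \<noteq> 0" by simp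
    show "u \<in> {..N}"
    proof (rule ccontr)
      assume "u \<notin> {..N}"
      then have "N < u" by simp
      then have "g u = g' u" using N2 p0_lt p1_lt by (intro goth) auto
      moreover have "g' u = 0" using N1 \<open>N < u\<close> by auto
      ultimately show False using gu by simp
    qed
  qed
  have g0: "g 0 = 0" using k1 g'fin goth[of 0] by auto
  define T where "T h t c a = (\<Sum>v\<in>{a..N}. if t v = c then h v else 0)"
    for h :: "nat \<Rightarrow> int" and t :: "nat \<Rightarrow> 'a" and c a
  have hypT: "\<And>u. 1 \<le> u \<Longrightarrow> T g' s' (s' u) u \<ge> 0"
    using g'cone tail_eq[OF N1] unfolding T_def by metis
  have hiT: "\<And>c a. k+6 \<le> a \<Longrightarrow> T g s c a = T g' s' c a"
    unfolding T_def
  proof (rule sum.cong)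
    fix c a v assume "k+6 \<le> a" "v \<in> {a..N}"
    then have "k+5 < v" by auto
    then show "(if s v = c then g v else 0) = (if s' v = c then g' v else 0)"
      using s_hi[of v] goth[of v] p0_lt p1_lt by auto
  qed simp
  have XY: "\<And>c. c \<in> I \<Longrightarrow> T g' s' c (k+6) \<ge> 0"
  proof -
    fix c assume "c \<in> I"
    then have "infinite {u. 1 \<le> u \<and> s' u = c}" using assms(3) unfolding inf_seq_def by auto
    then obtain w0 where "w0 > k+6" "w0 \<in> {u. 1 \<le> u \<and> s' u = c}"
      using finite_nat_set_iff_bounded_le[of "{u. 1 \<le> u \<and> s' u = c}"] by (meson not_le)
    then have ex: "k+6 \<le> w0 \<and> s' w0 = c" by auto
    define w where "w = (LEAST w. k+6 \<le> w \<and> s' w = c)"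
    have w: "k+6 \<le> w" "s' w = c" using LeastI[of "\<lambda>w. k+6 \<le> w \<and> s' w = c", OF ex] unfolding w_def by auto
    have nw: "\<And>v. k+6 \<le> v \<Longrightarrow> v < w \<Longrightarrow> s' v \<noteq> c" unfolding w_def using not_less_Least by blast
    have "T g' s' c (k+6) = T g' s' c w" unfolding T_def
      by (rule sum_skip) (use nw w in auto)
    also have "\<dots> \<ge> 0" using hypT[of w] w by simp
    finally show "T g' s' c (k+6) \<ge> 0" .
  qed
  define X where "X = T g' s' i (k+6)"
  define Y where "Y = T g' s' j (k+6)"
  have X0: "X \<ge> 0" and Y0: "Y \<ge> 0" unfolding X_def Y_def using XY iI by auto
  have splitM: "\<And>h t c u. k \<le> u \<Longrightarrow> u \<le> k+5 \<Longrightarrow> T h t c u = (\<Sum>v\<in>{u..k+5}. if t v = c then h v else 0) + T h t c (k+6)"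
  proof -
    fix h :: "nat \<Rightarrow> int" and t :: "nat \<Rightarrow> 'a" and c u assume "k \<le> u" "u \<le> k+5"
    have e: "k + 5 + 1 = k + 6" by simp
    show "?thesis h t c u" unfolding T_def
      by (rule sum_split_at[of u "k+5" N, unfolded e]) (use N2 \<open>u \<le> k+5\<close> in simp_all)
  qed
  note ex6 = splitM sum6
  have h1: "g' (k+4) + Y \<ge> 0"
  proof -
    have "T g' s' j (k+4) = g' (k+4) + Y" unfolding Y_def using s_i s_j ij ji by (simp add: ex6)
    then show ?thesis using hypT[of "k+4"] s_j by simp
  qed
  have h2: "g' (k+2) + g' (k+4) + Y \<ge> 0"
  proof -
    have "T g' s' j (k+2) = g' (k+2) + g' (k+4) + Y" unfolding Y_def using s_i s_j ij ji by (simp add: ex6)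
    then show ?thesis using hypT[of "k+2"] s_j by simp
  qed
  have h3: "g' k + g' (k+2) + g' (k+4) + Y \<ge> 0"
  proof -
    have "T g' s' j k = g' k + g' (k+2) + g' (k+4) + Y" unfolding Y_def using s_i s_j ij ji by (simp add: ex6)
    then show ?thesis using hypT[of "k"] s_j k1 by simp
  qed
  have h4: "g' (k+5) + X \<ge> 0"
  proof -
    have "T g' s' i (k+5) = g' (k+5) + X" unfolding X_def using s_i s_j ij ji by (simp add: ex6)
    then show ?thesis using hypT[of "k+5"] s_i by simp
  qed
  have h5: "g' (k+3) + g' (k+5) + X \<ge> 0"
  proof -
    have "T g' s' i (k+3) = g' (k+3) + g' (k+5) + X" unfolding X_def using s_i s_j ij ji by (simp add: ex6)
    then show ?thesis using hypT[of "k+3"] s_i by simp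
  qed
  have h6: "g' (k+1) + g' (k+3) + g' (k+5) + X \<ge> 0"
  proof -
    have "T g' s' i (k+1) = g' (k+1) + g' (k+3) + g' (k+5) + X" unfolding X_def using s_i s_j ij ji by (simp add: ex6)
    then show ?thesis using hypT[of "k+1"] s_i by simp
  qed
  note cr = core[OF cc X0 Y0 h1 h2 h3 h4 h5 h6 A_def B_def Cc_def D_def E_def F_def G_def H_def II_def]
  have lowsplit: "\<And>h t c u. u \<le> k \<Longrightarrow> T h t c u = (\<Sum>v\<in>{u..k-1}. if t v = c then h v else 0)
     + ((if t k = c then h k else 0) + (if t (k+1) = c then h (k+1) else 0) + (if t (k+2) = c then h (k+2) else 0)
     + (if t (k+3) = c then h (k+3) else 0) + (if t (k+4) = c then h (k+4) else 0) + (if t (k+5) = c then h (k+5) else 0))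
     + T h t c (k+6)"
  proof -
    fix h :: "nat \<Rightarrow> int" and t :: "nat \<Rightarrow> 'a" and c u assume "u \<le> k"
    have "T h t c u = (\<Sum>v\<in>{u..k-1}. if t v = c then h v else 0) + T h t c k"
      unfolding T_def using \<open>u \<le> k\<close> k1 N2 by (subst sum_split_at[of _ "k-1"]) auto
    also have "T h t c k = (\<Sum>v\<in>{k..k+5}. if t v = c then h v else 0) + T h t c (k+6)"
      by (rule splitM) simp_all
    finally show "?thesis h t c u" by (simp add: sum6 add.assoc)
  qed
  have main: "\<And>u. 1 \<le> u \<Longrightarrow> T g s (s u) u \<ge> 0"
  proof -
    fix u :: nat assume u1: "1 \<le> u"
    consider "k+6 \<le> u" | "k \<le> u \<and> u \<le> k+5" | "u < k" by linarith
    then show "T g s (s u) u \<ge> 0"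
    proof cases
      case 1
      then have "T g s (s u) u = T g' s' (s' u) u" using hiT s_hi[of u] by simp
      then show ?thesis using hypT[OF u1] by simp
    next
      case 2
      then have "u = k \<or> u = k+1 \<or> u = k+2 \<or> u = k+3 \<or> u = k+4 \<or> u = k+5" by arith
      have XX: "T g s i (k+6) = X" "T g s j (k+6) = Y" using hiT unfolding X_def Y_def by auto
      have e0: "T g s i k = g k + g (k+2) + g (k+4) + X" using s_i s_j ij ji XX by (simp add: ex6)
      have e1: "T g s j (k+1) = g (k+1) + g (k+3) + g (k+5) + Y" using s_i s_j ij ji XX by (simp add: ex6)
      have e2: "T g s i (k+2) = g (k+2) + g (k+4) + X" using s_i s_j ij ji XX by (simp add: ex6)
      have e3: "T g s j (k+3) = g (k+3) + g (k+5) + Y" using s_i s_j ij ji XX by (simp add: ex6)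
      have e4: "T g s i (k+4) = g (k+4) + X" using s_i s_j ij ji XX by (simp add: ex6)
      have e5: "T g s j (k+5) = g (k+5) + Y" using s_i s_j ij ji XX by (simp add: ex6)
      from \<open>u = k \<or> _\<close> show ?thesis
      proof (elim disjE)
        assume "u = k" then show ?thesis using e0 gk cr s_i by (simp; linarith?)
      next
        assume "u = k+1" then show ?thesis using e1 gk cr s_j by (simp; linarith?)
      next
        assume "u = k+2" then show ?thesis using e2 gk cr s_i by (simp; linarith?)
      next
        assume "u = k+3" then show ?thesis using e3 gk cr s_j by (simp; linarith?)
      next
        assume "u = k+4" then show ?thesis using e4 gk cr s_i by (simp; linarith?)
      next
        assume "u = k+5" then show ?thesis using e5 gk cr s_j by (simp; linarith?)
      qed
    next
      case 3
      define c where "c = s u"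
      have su': "s' u = c" using s_lo[OF u1 3] c_def by simp
      have Pdiff: "(\<Sum>v\<in>{u..k-1}. if s v = c then g v else 0) = (\<Sum>v\<in>{u..k-1}. if s' v = c then g' v else 0)
          + (if c = i then g p0 - g' p0 else 0) + (if c = j then g p1 - g' p1 else 0)"
      proof -
        have eqv: "\<And>v. v \<in> {u..k-1} \<Longrightarrow> s' v = s v" using s_lo u1 k1 by auto
        consider "c = i" | "c = j" | "c \<noteq> i \<and> c \<noteq> j" by blast
        then show ?thesis
        proof cases
          case 1
          have up: "u \<le> p0" using p0_max[OF u1 3] c_def 1 by simp
          then have p0pos: "0 < p0" "p0 \<in> {u..k-1}" using u1 p0_lt by auto
          have sp0: "s p0 = i" using p0_c p0pos by auto
          have "(\<Sum>v\<in>{u..k-1}. if s v = c then g v else 0) = (if s p0 = c then g p0 else 0)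
              + (\<Sum>v\<in>{u..k-1} - {p0}. if s v = c then g v else 0)"
            by (rule sum.remove) (use p0pos in auto)
          also have "(\<Sum>v\<in>{u..k-1} - {p0}. if s v = c then g v else 0) = (\<Sum>v\<in>{u..k-1} - {p0}. if s' v = c then g' v else 0)"
          proof (rule sum.cong)
            fix v assume v: "v \<in> {u..k-1} - {p0}"
            then have "s' v = s v" using eqv by auto
            moreover have "s v = c \<Longrightarrow> g v = g' v"
              using v k1 p1_c 1 ij by (intro goth) auto
            ultimately show "(if s v = c then g v else 0) = (if s' v = c then g' v else 0)" by auto
          qed simp
          also have "(\<Sum>v\<in>{u..k-1}. if s' v = c then g' v else 0) = (if s' p0 = c then g' p0 else 0)
              + (\<Sum>v\<in>{u..k-1} - {p0}. if s' v = c then g' v else 0)"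
            by (rule sum.remove) (use p0pos in auto)
          ultimately show ?thesis using 1 sp0 eqv[OF p0pos(2)] ij by simp
        next
          case 2
          have up: "u \<le> p1" using p1_max[OF u1] 3 c_def 2 by simp
          then have p1pos: "0 < p1" "p1 \<in> {u..k-1}" using u1 p1_lt by auto
          have sp1: "s p1 = j" using p1_c p1pos by auto
          have "(\<Sum>v\<in>{u..k-1}. if s v = c then g v else 0) = (if s p1 = c then g p1 else 0)
              + (\<Sum>v\<in>{u..k-1} - {p1}. if s v = c then g v else 0)"
            by (rule sum.remove) (use p1pos in auto)
          also have "(\<Sum>v\<in>{u..k-1} - {p1}. if s v = c then g v else 0) = (\<Sum>v\<in>{u..k-1} - {p1}. if s' v = c then g' v else 0)"
          proof (rule sum.cong)
            fix v assume v: "v \<in> {u..k-1} - {p1}"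
            then have "s' v = s v" using eqv by auto
            moreover have "s v = c \<Longrightarrow> g v = g' v"
              using v k1 p0_c 2 ij by (intro goth) auto
            ultimately show "(if s v = c then g v else 0) = (if s' v = c then g' v else 0)" by auto
          qed simp
          also have "(\<Sum>v\<in>{u..k-1}. if s' v = c then g' v else 0) = (if s' p1 = c then g' p1 else 0)
              + (\<Sum>v\<in>{u..k-1} - {p1}. if s' v = c then g' v else 0)"
            by (rule sum.remove) (use p1pos in auto)
          ultimately show ?thesis using 2 sp1 eqv[OF p1pos(2)] ij by simp
        next
          case 3
          have "(\<Sum>v\<in>{u..k-1}. if s v = c then g v else 0) = (\<Sum>v\<in>{u..k-1}. if s' v = c then g' v else 0)"
          proof (rule sum.cong)
            fix v assume v: "v \<in> {u..k-1}"
            then have "s' v = s v" using eqv by auto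
            moreover have "s v = c \<Longrightarrow> g v = g' v"
              using v k1 p0_c p1_c 3 by (intro goth) auto
            ultimately show "(if s v = c then g v else 0) = (if s' v = c then g' v else 0)" by auto
          qed simp
          then show ?thesis using 3 by simp
        qed
      qed
      have eq: "T g s c u = T g' s' c u"
      proof -
        have L: "T g s c u = (\<Sum>v\<in>{u..k-1}. if s v = c then g v else 0)
          + ((if i = c then g k else 0) + (if j = c then g (k+1) else 0) + (if i = c then g (k+2) else 0)
          + (if j = c then g (k+3) else 0) + (if i = c then g (k+4) else 0) + (if j = c then g (k+5) else 0))
          + T g' s' c (k+6)"
          using lowsplit[of u g s c] 3 hiT[of "k+6" c] s_i s_j by simp
        have R: "T g' s' c u = (\<Sum>v\<in>{u..k-1}. if s' v = c then g' v else 0)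
          + ((if j = c then g' k else 0) + (if i = c then g' (k+1) else 0) + (if j = c then g' (k+2) else 0)
          + (if i = c then g' (k+3) else 0) + (if j = c then g' (k+4) else 0) + (if i = c then g' (k+5) else 0))
          + T g' s' c (k+6)"
          using lowsplit[of u g' s' c] 3 s_i s_j by simp
        have c1: "c = i \<Longrightarrow> 0 < p0" using p0_max[OF u1 3] c_def u1 by fastforce
        have c2: "c = j \<Longrightarrow> 0 < p1" using p1_max[OF u1] 3 c_def u1 by fastforce
        consider "c = i" | "c = j" | "c \<noteq> i \<and> c \<noteq> j" by blast
        then show ?thesis
        proof cases
          case 1
          show ?thesis using L R Pdiff 1 ij gp0[OF c1[OF 1]] gk cr by simp
        next
          case 2
          show ?thesis using L R Pdiff 2 ij gp1[OF c2[OF 2]] gk cr by simp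
        next
          case 3
          then show ?thesis using L R Pdiff by auto
        qed
      qed
      show ?thesis using eq hypT[OF u1] c_def su' by simp
    qed
  qed
  have gfv: "g \<in> fin_vecs" unfolding fin_vecs_def using g0 N3 finite_subset by auto
  have "\<forall>u\<ge>1. (\<Sum>v\<in>{v. u \<le> v \<and> s v = s u \<and> g v \<noteq> 0}. g v) \<ge> 0"
  proof (intro allI impI)
    fix u :: nat assume "1 \<le> u"
    have "(\<Sum>v\<in>{v. u \<le> v \<and> s v = s u \<and> g v \<noteq> 0}. g v) = T g s (s u) u"
      unfolding T_def by (rule tail_eq[OF N3])
    then show "(\<Sum>v\<in>{v. u \<le> v \<and> s v = s u \<and> g v \<noteq> 0}. g v) \<ge> 0" using main[OF \<open>1 \<le> u\<close>] by simp
  qed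
  then have "g \<in> cone s"
    unfolding cone_def using gfv by blast
  then show ?thesis unfolding g_def .
qed
end
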